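(* Let $C$ be a complete structured DNNF, $g$ a var-gate or $\times$-gate of $C$, and $S\in S(g)$. Then the box of $g$ is the (unique) least common ancestor, in the tree of boxes, of the boxes containing the var-gates whose variables occur in $S$.
   Context: A set circuit $C=(G,W,\mu)$ is a finite DAG with gates $G$, wires $W\subseteq G\times G$, gate types $\mu(g)\in\{\top,\bot,\mathrm{var},\times,\cup\}$, and an injective map $S_{\mathrm{var}}$ giving each var-gate a set of variables; $C_{\mathrm{var}}$ is the union of all $S_{\mathrm{var}}(g)$. Inputs of $g$ are the $g'$ with $(g',g)\in W$; $\top,\bot,\mathrm{var}$-gates have no inputs, $\times$-gates exactly two, $\cup$-gates at least one, and $\top,\bot$-gates are never inputs of any gate. Captured sets: $S(g)=\{S_{\mathrm{var}}(g)\}$ for var-gates, $\emptyset$ for $\bot$, $\{\emptyset\}$ for $\top$, $\{S_1\cup S_2\mid S_1\in S(g_1),S_2\in S(g_2)\}$ for a $\times$-gate with inputs $g_1,g_2$, the union over inputs for $\cup$-gates. A v-tree $\mathcal{T}$ for $C$ is a binary tree whose leaves are labeled by sets of variables forming a partition of $C_{\mathrm{var}}$. A structuring function $\sigma$ from $C$ to $\mathcal{T}$ maps each var-gate $g$ to a leaf whose label contains $S_{\mathrm{var}}(g)$, ensures that for each wire $(g',g)$ either $\sigma(g')=\sigma(g)$ or $g'$ is a $\cup$-gate with $\sigma(g')$ a child of $\sigma(g)$, and that each $\times$-gate $g$ has one input mapped to the left child and one to the right child of $\sigma(g)$. A complete structured DNNF is $C$ with such $\mathcal{T}$ and $\sigma$.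 The box of a gate $g$ is $\sigma^{-1}(\sigma(g))$; the boxes $\sigma^{-1}(m)$ for nodes $m$ of $\mathcal{T}$ form a tree (the tree of boxes) isomorphic to $\mathcal{T}$. *)

theory Defs
  imports Main
begin

datatype gate_type = GTop | GBot | GVar | GTimes | GUnion

record ('g, 'v) set_circuit =
  gates :: "'g set"
  wires :: "('g \<times> 'g) set"
  gtype :: "'g \<Rightarrow> gate_type"
  svar  :: "'g \<Rightarrow> 'v set"

definition inputs :: "('g, 'v) set_circuit \<Rightarrow> 'g \<Rightarrow> 'g set" where
  "inputs C g = {g'. (g', g) \<in> wires C}"

definition var_gates :: "('g, 'v) set_circuit \<Rightarrow> 'g set" where
  "var_gates C = {g \<in> gates C. gtype C g = GVar}"

definition circuit_vars :: "('g, 'v) set_circuit \<Rightarrow> 'v set" where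
  "circuit_vars C = (\<Union>g \<in> var_gates C. svar C g)"

definition set_circuit :: "('g, 'v) set_circuit \<Rightarrow> bool" where
  "set_circuit C \<longleftrightarrow>
     finite (gates C) \<and>
     wires C \<subseteq> gates C \<times> gates C \<and>
     acyclic (wires C) \<and>
     (\<forall>g \<in> gates C. gtype C g \<in> {GTop, GBot, GVar} \<longrightarrow> inputs C g = {}) \<and>
     (\<forall>g \<in> gates C. gtype C g = GTimes \<longrightarrow> card (inputs C g) = 2) \<and>
     (\<forall>g \<in> gates C. gtype C g = GUnion \<longrightarrow> inputs C g \<noteq> {}) \<and>
     (\<forall>(g', g) \<in> wires C. gtype C g' \<notin> {GTop, GBot}) \<and>
     inj_on (svar C) (var_gates C)"

text \<open>captures C g S  means  S is in S(g). Inductive definition; on a finite DAG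
  this coincides with the recursive definition of captured sets.\<close>
inductive captures :: "('g, 'v) set_circuit \<Rightarrow> 'g \<Rightarrow> 'v set \<Rightarrow> bool" for C where
  cap_var: "\<lbrakk>g \<in> gates C; gtype C g = GVar\<rbrakk> \<Longrightarrow> captures C g (svar C g)"
| cap_top: "\<lbrakk>g \<in> gates C; gtype C g = GTop\<rbrakk> \<Longrightarrow> captures C g {}"
| cap_times: "\<lbrakk>g \<in> gates C; gtype C g = GTimes; inputs C g = {g1, g2}; g1 \<noteq> g2;
               captures C g1 S1; captures C g2 S2\<rbrakk> \<Longrightarrow> captures C g (S1 \<union> S2)"
| cap_union: "\<lbrakk>g \<in> gates C; gtype C g = GUnion; g' \<in> inputs C g; captures C g' S\<rbrakk>
               \<Longrightarrow> captures C g S"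

datatype 'v vtree = VLeaf "'v set" | VNode "'v vtree" "'v vtree"

text \<open>Nodes are addressed by positions: False = left child, True = right child.\<close>
fun positions :: "'v vtree \<Rightarrow> bool list set" where
  "positions (VLeaf A) = {[]}"
| "positions (VNode l r) = {[]} \<union> Cons False ` positions l \<union> Cons True ` positions r"

fun subtree_at :: "'v vtree \<Rightarrow> bool list \<Rightarrow> 'v vtree option" where
  "subtree_at t [] = Some t"
| "subtree_at (VLeaf A) (b # p) = None"
| "subtree_at (VNode l r) (b # p) = subtree_at (if b then r else l) p"

definition leaf_label :: "'v vtree \<Rightarrow> bool list \<Rightarrow> 'v set \<Rightarrow> bool" where
  "leaf_label T p A \<longleftrightarrow> subtree_at T p = Some (VLeaf A)"

definition is_vtree_for :: "('g, 'v) set_circuit \<Rightarrow> 'v vtree \<Rightarrow> bool" where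
  "is_vtree_for C T \<longleftrightarrow>
     (\<forall>p A. leaf_label T p A \<longrightarrow> A \<noteq> {}) \<and>
     (\<forall>p q A B. leaf_label T p A \<and> leaf_label T q B \<and> p \<noteq> q \<longrightarrow> A \<inter> B = {}) \<and>
     (\<Union>{A. \<exists>p. leaf_label T p A} = circuit_vars C)"

definition ancestor :: "bool list \<Rightarrow> bool list \<Rightarrow> bool" where
  "ancestor p q \<longleftrightarrow> (\<exists>r. q = p @ r)"

definition is_lca :: "'v vtree \<Rightarrow> bool list set \<Rightarrow> bool list \<Rightarrow> bool" where
  "is_lca T N m \<longleftrightarrow> m \<in> positions T \<and> (\<forall>n \<in> N. ancestor m n) \<and>
     (\<forall>m' \<in> positions T. (\<forall>n \<in> N. ancestor m' n) \<longrightarrow> ancestor m' m)"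

definition structuring :: "('g, 'v) set_circuit \<Rightarrow> 'v vtree \<Rightarrow> ('g \<Rightarrow> bool list) \<Rightarrow> bool" where
  "structuring C T \<sigma> \<longleftrightarrow>
     (\<forall>g \<in> gates C. \<sigma> g \<in> positions T) \<and>
     (\<forall>g \<in> var_gates C. \<exists>A. leaf_label T (\<sigma> g) A \<and> svar C g \<subseteq> A) \<and>
     (\<forall>(g', g) \<in> wires C. \<sigma> g' = \<sigma> g \<or>
        (gtype C g' = GUnion \<and> (\<sigma> g' = \<sigma> g @ [False] \<or> \<sigma> g' = \<sigma> g @ [True]))) \<and>
     (\<forall>g \<in> gates C. gtype C g = GTimes \<longrightarrow>
        (\<exists>g1 g2. inputs C g = {g1, g2} \<and> \<sigma> g1 = \<sigma> g @ [False] \<and> \<sigma> g2 = \<sigma> g @ [True]))"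

definition complete_sdnnf :: "('g, 'v) set_circuit \<Rightarrow> 'v vtree \<Rightarrow> ('g \<Rightarrow> bool list) \<Rightarrow> bool" where
  "complete_sdnnf C T \<sigma> \<longleftrightarrow> set_circuit C \<and> is_vtree_for C T \<and> structuring C T \<sigma>"

definition node_box :: "('g, 'v) set_circuit \<Rightarrow> ('g \<Rightarrow> bool list) \<Rightarrow> bool list \<Rightarrow> 'g set" where
  "node_box C \<sigma> m = {g' \<in> gates C. \<sigma> g' = m}"

definition box :: "('g, 'v) set_circuit \<Rightarrow> ('g \<Rightarrow> bool list) \<Rightarrow> 'g \<Rightarrow> 'g set" where
  "box C \<sigma> g = node_box C \<sigma> (\<sigma> g)"

end

theory Submission
  imports Defs
begin

lemma anc_refl: "ancestor p p" by (auto simp: ancestor_def)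
lemma anc_trans: "ancestor p q \<Longrightarrow> ancestor q r \<Longrightarrow> ancestor p r"
  by (auto simp: ancestor_def)
lemma anc_antisym: "ancestor p q \<Longrightarrow> ancestor q p \<Longrightarrow> p = q"
  by (auto simp: ancestor_def)

lemma anc_split:
  assumes "ancestor m (p @ [False] @ r1)" "ancestor m (p @ [True] @ r2)"
  shows "ancestor m p"
  using assms
proof (induction m arbitrary: p)
  case Nil then show ?case by (simp add: ancestor_def)
next
  case (Cons a m)
  show ?case
  proof (cases p)
    case Nil
    then show ?thesis using Cons.prems by (auto simp: ancestor_def)
  next
    case (Cons b p')
    with Cons.prems have "ancestor m (p' @ [False] @ r1)" "ancestor m (p' @ [True] @ r2)" "a = b"
      by (auto simp: ancestor_def)
    with Cons.IH Cons show ?thesis by (auto simp: ancestor_def)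
  qed
qed

lemma wire_anc:
  assumes "structuring C T \<sigma>" "(g', g) \<in> wires C"
  shows "ancestor (\<sigma> g) (\<sigma> g')"
  using assms unfolding structuring_def ancestor_def by fastforce

lemma cap_leaves:
  assumes "structuring C T \<sigma>" "set_circuit C"
  shows "captures C h S \<Longrightarrow> S \<subseteq> \<Union>{A. \<exists>p. leaf_label T p A \<and> ancestor (\<sigma> h) p}"
proof (induction rule: captures.induct)
  case (cap_var g)
  then have "g \<in> var_gates C" by (simp add: var_gates_def)
  then show ?case using assms(1) anc_refl unfolding structuring_def by blast
next
  case (cap_top g) then show ?case by simp
next
  case (cap_times g g1 g2 S1 S2)
  have "g1 \<in> inputs C g" "g2 \<in> inputs C g" using cap_times(3) by auto
  then have "ancestor (\<sigma> g) (\<sigma> g1)" "ancestor (\<sigma> g) (\<sigma> g2)"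
    using wire_anc[OF assms(1)] by (auto simp: inputs_def)
  then show ?case using cap_times.IH anc_trans by blast
next
  case (cap_union g g' S)
  then have "ancestor (\<sigma> g) (\<sigma> g')"
    using wire_anc[OF assms(1)] by (auto simp: inputs_def)
  then show ?case using cap_union.IH anc_trans by blast
qed

lemma cap_witness:
  assumes "structuring C T \<sigma>" "set_circuit C"
  shows "captures C h S \<Longrightarrow> gtype C h \<noteq> GTop \<Longrightarrow>
     \<exists>g' \<in> var_gates C. svar C g' \<subseteq> S \<and> ancestor (\<sigma> h) (\<sigma> g')"
proof (induction rule: captures.induct)
  case (cap_var g)
  then have "g \<in> var_gates C" by (simp add: var_gates_def)
  then show ?case using anc_refl by blast
next
  case (cap_top g) then show ?case by simp
next
  case (cap_times g g1 g2 S1 S2)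
  have w: "(g1, g) \<in> wires C" using cap_times(3) by (auto simp: inputs_def)
  then have "ancestor (\<sigma> g) (\<sigma> g1)" using wire_anc[OF assms(1)] by auto
  moreover have "gtype C g1 \<noteq> GTop" using w assms(2) unfolding set_circuit_def by fastforce
  ultimately show ?case using cap_times.IH(1) anc_trans by blast
next
  case (cap_union g g' S)
  have w: "(g', g) \<in> wires C" using cap_union(3) by (auto simp: inputs_def)
  then have "ancestor (\<sigma> g) (\<sigma> g')" using wire_anc[OF assms(1)] by auto
  moreover have "gtype C g' \<noteq> GTop" using w assms(2) unfolding set_circuit_def by fastforce
  ultimately show ?case using cap_union.IH anc_trans by blast
qed

theorem lemma5p1:
  fixes C :: "('g, 'v) set_circuit" and T :: "'v vtree" and \<sigma> :: "'g \<Rightarrow> bool list"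
  assumes "complete_sdnnf C T \<sigma>"
    and "\<forall>g' \<in> var_gates C. svar C g' \<noteq> {}"
    and "g \<in> gates C" and "gtype C g \<in> {GVar, GTimes}"
    and "captures C g S"
  shows "\<exists>!m. is_lca T {\<sigma> g' | g'. g' \<in> var_gates C \<and> svar C g' \<subseteq> S} m
              \<and> box C \<sigma> g = node_box C \<sigma> m"
proof -
  define N where "N = {\<sigma> g' | g'. g' \<in> var_gates C \<and> svar C g' \<subseteq> S}"
  have sc: "set_circuit C" and vt: "is_vtree_for C T" and st: "structuring C T \<sigma>"
    using assms(1) by (auto simp: complete_sdnnf_def)
  have pos: "\<sigma> g \<in> positions T" using st assms(3) by (auto simp: structuring_def)
  have down: "\<forall>n \<in> N. ancestor (\<sigma> g) n"
  proof
    fix n assume "n \<in> N"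
    then obtain g'' where g'': "g'' \<in> var_gates C" "svar C g'' \<subseteq> S" "n = \<sigma> g''"
      unfolding N_def by blast
    obtain v where v: "v \<in> svar C g''" using assms(2) g'' by blast
    then have "v \<in> S" using g'' by blast
    then obtain p A where pA: "leaf_label T p A" "ancestor (\<sigma> g) p" "v \<in> A"
      using cap_leaves[OF st sc assms(5)] by blast
    obtain B where B: "leaf_label T (\<sigma> g'') B" "svar C g'' \<subseteq> B"
      using st g''(1) unfolding structuring_def by blast
    have "p = \<sigma> g''"
    proof (rule ccontr)
      assume "p \<noteq> \<sigma> g''"
      then have "A \<inter> B = {}" using vt pA(1) B(1) unfolding is_vtree_for_def by blast
      then show False using pA(3) B(2) v by blast
    qed
    then show "ancestor (\<sigma> g) n" using pA(2) g''(3) by simp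
  qed
  have least: "\<forall>m' \<in> positions T. (\<forall>n \<in> N. ancestor m' n) \<longrightarrow> ancestor m' (\<sigma> g)"
  proof (intro ballI impI)
    fix m' assume m': "\<forall>n \<in> N. ancestor m' n"
    show "ancestor m' (\<sigma> g)"
    proof (cases "gtype C g = GVar")
      case True
      have "S = svar C g" using assms(5) True
        by (cases rule: captures.cases) auto
      moreover have "g \<in> var_gates C" using True assms(3) by (simp add: var_gates_def)
      ultimately have "\<sigma> g \<in> N" unfolding N_def by blast
      then show ?thesis using m' by blast
    next
      case False
      then have gt: "gtype C g = GTimes" using assms(4) by auto
      obtain g1 g2 S1 S2 where c: "inputs C g = {g1, g2}" "captures C g1 S1" "captures C g2 S2"
        "S = S1 \<union> S2"
        using assms(5) gt by (cases rule: captures.cases) auto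
      obtain a b where ab: "inputs C g = {a, b}" "\<sigma> a = \<sigma> g @ [False]" "\<sigma> b = \<sigma> g @ [True]"
        using st assms(3) gt unfolding structuring_def by blast
      have nt: "gtype C x \<noteq> GTop" if "x \<in> inputs C g" for x
        using that sc unfolding set_circuit_def inputs_def by fastforce
      have ex: "\<exists>S'. captures C x S' \<and> S' \<subseteq> S" if "x \<in> inputs C g" for x
        using that c by auto
      have wit: "\<exists>n \<in> N. ancestor (\<sigma> x) n" if xin: "x \<in> inputs C g" for x
      proof -
        obtain S' where "captures C x S'" "S' \<subseteq> S" using ex xin by blast
        then obtain g' where "g' \<in> var_gates C" "svar C g' \<subseteq> S" "ancestor (\<sigma> x) (\<sigma> g')"
          using cap_witness[OF st sc _ nt[OF xin]] by blast
        then show ?thesis unfolding N_def by blast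
      qed
      obtain n1 where n1: "n1 \<in> N" "ancestor (\<sigma> a) n1" using wit ab(1) by blast
      obtain n2 where n2: "n2 \<in> N" "ancestor (\<sigma> b) n2" using wit ab(1) by blast
      obtain r1 where "n1 = \<sigma> g @ [False] @ r1" using n1(2) ab(2) by (auto simp: ancestor_def)
      moreover obtain r2 where "n2 = \<sigma> g @ [True] @ r2" using n2(2) ab(3) by (auto simp: ancestor_def)
      ultimately show ?thesis using anc_split[of m' "\<sigma> g" r1 r2] m' n1(1) n2(1) by simp
    qed
  qed
  have lca: "is_lca T N (\<sigma> g)" using pos down least by (simp add: is_lca_def)
  have uniq: "m = \<sigma> g" if "is_lca T N m" for m
  proof -
    have "m \<in> positions T" "\<forall>n \<in> N. ancestor m n"
      "\<forall>m' \<in> positions T. (\<forall>n \<in> N. ancestor m' n) \<longrightarrow> ancestor m' m"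
      using that unfolding is_lca_def by auto
    then have "ancestor m (\<sigma> g)" "ancestor (\<sigma> g) m" using pos down least by auto
    then show ?thesis using anc_antisym by blast
  qed
  show ?thesis unfolding N_def[symmetric]
    using lca uniq unfolding box_def by blast
qed

end
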